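(* Let $0<m\le L$, $\kappa=L/m$, and let $\rho\in(0,1)$ satisfy $T_s=1/(1-\rho)\ge(\sqrt\kappa+1)/2$. Let $c=\dfrac{\kappa-(1+\rho)/(1-\rho)}{\rho\,(\kappa+(1+\rho)/(1-\rho))}$. Then $c\in[-1,1]$, the two-step momentum algorithm with parameters $\alpha=(1+\rho)(1+c\rho)/L$, $\beta=c\rho^2$, $\gamma=0$ achieves convergence rate $\rho$ for all $f\in\mathcal{Q}_m^L$, and $$\hat J_{\max}:=\max_{\lambda\in[m,L]}\hat J(\lambda)=\hat J(m)=\hat J(L)=\frac{\sigma_w^2(\kappa+1)}{2(1-c\rho^2)(1+\rho)(1+c\rho)},$$ $$\hat J_{\min}:=\min_{\lambda\in[m,L]}\hat J(\lambda)=\hat J(\hat\lambda)=\frac{\sigma_w^2}{(1+c\rho^2)(1-c\rho^2)},\qquad \hat\lambda=(m+L)/2.$$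
   Context: $\mathcal{Q}_m^L$ is the class of quadratic functions $f(x)=\tfrac12x^TQx-q^Tx$ on $\mathbb{R}^n$ with $q\in\mathbb{R}^n$, $Q=Q^T\succ0$ whose largest eigenvalue is $L$ and smallest is $m$. The two-step momentum algorithm is $x^{t+2}=x^{t+1}+\beta(x^{t+1}-x^t)-\alpha\nabla f\big(x^{t+1}+\gamma(x^{t+1}-x^t)\big)+\sigma_w w^t$ ($w^t$ white noise with zero mean and identity covariance, $\sigma_w\ge0$), with state matrix $A=\begin{bmatrix}0&I\\-\beta I+\gamma\alpha Q&(1+\beta)I-(1+\gamma)\alpha Q\end{bmatrix}$ on $\psi^t=[(x^t-x^\star)^T,(x^{t+1}-x^\star)^T]^T$; rate $\rho$ is achieved for all $f\in\mathcal{Q}_m^L$ if the spectral radius of $A$ is at most $\rho$ for every such $f$. For $\lambda>0$ let $a(\lambda)=\beta-\gamma\alpha\lambda$, $b(\lambda)=(1+\gamma)\alpha\lambda-(1+\beta)$, $d=a+b+1$, $l=a-b+1$, $h=1-a$ (evaluated at $\lambda$), and $\hat J(\lambda)=\sigma_w^2(d(\lambda)+l(\lambda))/(2d(\lambda)h(\lambda)l(\lambda))$ (the contribution of Hessian eigenvalue $\lambda$ to the steady-state variance of $x^t-x^\star$). *)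

theory Defs
  imports Complex_Main "Jordan_Normal_Form.Spectral_Radius"
begin

text \<open>Hessians Q of functions in the class Q_m^L on R^n (the linear term q plays no
  role in the state matrix, so only Q is recorded): Q is an n x n real symmetric
  positive definite matrix whose largest eigenvalue is L and smallest is m.\<close>
definition quad_hessian_class :: "real \<Rightarrow> real \<Rightarrow> nat \<Rightarrow> real mat \<Rightarrow> bool" where
  "quad_hessian_class m L n Q \<longleftrightarrow>
     Q \<in> carrier_mat n n \<and> transpose_mat Q = Q \<and>
     (\<forall>x \<in> carrier_vec n. x \<noteq> 0\<^sub>v n \<longrightarrow> x \<bullet> (Q *\<^sub>v x) > 0) \<and>
     eigenvalue Q L \<and> eigenvalue Q m \<and>
     (\<forall>lam. eigenvalue Q lam \<longrightarrow> m \<le> lam \<and> lam \<le> L)"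

text \<open>State matrix A of the two-step momentum algorithm acting on
  psi^t = [x^t - x*; x^(t+1) - x*].\<close>
definition momentum_state_matrix :: "real \<Rightarrow> real \<Rightarrow> real \<Rightarrow> nat \<Rightarrow> real mat \<Rightarrow> real mat" where
  "momentum_state_matrix \<alpha> \<beta> \<gamma> n Q =
     four_block_mat (0\<^sub>m n n) (1\<^sub>m n)
       ((- \<beta>) \<cdot>\<^sub>m 1\<^sub>m n + (\<gamma> * \<alpha>) \<cdot>\<^sub>m Q)
       ((1 + \<beta>) \<cdot>\<^sub>m 1\<^sub>m n - ((1 + \<gamma>) * \<alpha>) \<cdot>\<^sub>m Q)"

definition achieves_rate :: "real \<Rightarrow> real \<Rightarrow> real \<Rightarrow> real \<Rightarrow> real \<Rightarrow> real \<Rightarrow> bool" where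
  "achieves_rate m L \<alpha> \<beta> \<gamma> \<rho> \<longleftrightarrow>
     (\<forall>n Q. quad_hessian_class m L n Q \<longrightarrow>
        spectral_radius (map_mat complex_of_real (momentum_state_matrix \<alpha> \<beta> \<gamma> n Q)) \<le> \<rho>)"

definition ma :: "real \<Rightarrow> real \<Rightarrow> real \<Rightarrow> real \<Rightarrow> real" where
  "ma \<alpha> \<beta> \<gamma> lam = \<beta> - \<gamma> * \<alpha> * lam"
definition mb :: "real \<Rightarrow> real \<Rightarrow> real \<Rightarrow> real \<Rightarrow> real" where
  "mb \<alpha> \<beta> \<gamma> lam = (1 + \<gamma>) * \<alpha> * lam - (1 + \<beta>)"
definition md :: "real \<Rightarrow> real \<Rightarrow> real \<Rightarrow> real \<Rightarrow> real" where
  "md \<alpha> \<beta> \<gamma> lam = ma \<alpha> \<beta> \<gamma> lam + mb \<alpha> \<beta> \<gamma> lam + 1"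
definition ml :: "real \<Rightarrow> real \<Rightarrow> real \<Rightarrow> real \<Rightarrow> real" where
  "ml \<alpha> \<beta> \<gamma> lam = ma \<alpha> \<beta> \<gamma> lam - mb \<alpha> \<beta> \<gamma> lam + 1"
definition mh :: "real \<Rightarrow> real \<Rightarrow> real \<Rightarrow> real \<Rightarrow> real" where
  "mh \<alpha> \<beta> \<gamma> lam = 1 - ma \<alpha> \<beta> \<gamma> lam"

text \<open>Contribution of Hessian eigenvalue lam to the steady-state variance.\<close>
definition Jhat :: "real \<Rightarrow> real \<Rightarrow> real \<Rightarrow> real \<Rightarrow> real \<Rightarrow> real" where
  "Jhat \<sigma>w \<alpha> \<beta> \<gamma> lam =
     \<sigma>w\<^sup>2 * (md \<alpha> \<beta> \<gamma> lam + ml \<alpha> \<beta> \<gamma> lam) /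
     (2 * md \<alpha> \<beta> \<gamma> lam * mh \<alpha> \<beta> \<gamma> lam * ml \<alpha> \<beta> \<gamma> lam)"

end

theory Submission
  imports Defs
begin

lemma params:
  fixes m L \<rho> \<kappa> c \<alpha> :: real
  assumes "0 < m" and "m \<le> L" and "\<kappa> = L / m"
    and "0 < \<rho>" and "\<rho> < 1"
    and "1 / (1 - \<rho>) \<ge> (sqrt \<kappa> + 1) / 2"
    and "c = (\<kappa> - (1 + \<rho>) / (1 - \<rho>)) / (\<rho> * (\<kappa> + (1 + \<rho>) / (1 - \<rho>)))"
    and "\<alpha> = (1 + \<rho>) * (1 + c * \<rho>) / L"
  shows "-1 \<le> c" "c \<le> 1" "\<alpha> > 0" "\<alpha> * L = (1 + \<rho>) * (1 + c * \<rho>)"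
    "\<alpha> * m = (1 - \<rho>) * (1 - c * \<rho>)"
proof -
  define s where "s = (1 + \<rho>) / (1 - \<rho>)"
  have s1: "s \<ge> 1" using assms(4,5) by (simp add: s_def field_simps)
  have k1: "\<kappa> \<ge> 1" using assms(1-3) by simp
  have sq: "sqrt \<kappa> \<le> s" using assms(4-6) by (simp add: s_def field_simps)
  have "\<kappa> \<le> s\<^sup>2" using sq k1
    by (metis order_trans power_mono real_sqrt_ge_zero real_sqrt_pow2 zero_le_one)
  have ks: "\<kappa> \<le> s * s" using \<open>\<kappa> \<le> s\<^sup>2\<close> by (simp add: power2_eq_square)
  have kspos: "\<kappa> + s > 0" using k1 s1 by simp
  have cc: "c = (\<kappa> - s) / (\<rho> * (\<kappa> + s))" using assms(7) unfolding s_def .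
  have nz: "\<rho> * (\<kappa> + s) \<noteq> 0" using kspos assms(4) by simp
  have cdef: "c * (\<rho> * (\<kappa> + s)) = \<kappa> - s" unfolding cc using nz by simp
  have sr: "s * (1 - \<rho>) = 1 + \<rho>" using assms(5) by (simp add: s_def field_simps)
  show c1: "-1 \<le> c"
  proof (rule ccontr)
    assume "\<not> ?thesis" hence "c < -1" by simp
    hence "c * (\<rho> * (\<kappa> + s)) < -1 * (\<rho> * (\<kappa> + s))"
      using kspos assms(4) by (intro mult_strict_right_mono) auto
    hence "\<kappa> * (1 + \<rho>) < s * (1 - \<rho>)" using cdef by (simp add: algebra_simps)
    hence "\<kappa> * (1 + \<rho>) < 1 * (1 + \<rho>)" using sr by simp
    hence "\<kappa> < 1" using assms(4) mult_less_cancel_right_pos[of "1 + \<rho>" \<kappa> 1] by simp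
    thus False using k1 by simp
  qed
  show c2: "c \<le> 1"
  proof (rule ccontr)
    assume "\<not> ?thesis" hence "c > 1" by simp
    hence "c * (\<rho> * (\<kappa> + s)) > 1 * (\<rho> * (\<kappa> + s))"
      using kspos assms(4) by (intro mult_strict_right_mono) auto
    hence "\<kappa> * (1 - \<rho>) > s * (1 + \<rho>)" using cdef by (simp add: algebra_simps)
    moreover have "s * (1 + \<rho>) = s * s * (1 - \<rho>)" using sr by (metis mult.assoc)
    ultimately have "\<kappa> * (1 - \<rho>) > s * s * (1 - \<rho>)" by simp
    hence "\<kappa> > s * s" using assms(5) by simp
    thus False using ks by simp
  qed
  have "c * \<rho> \<ge> -1 * \<rho>" using c1 assms(4) by (intro mult_right_mono) auto
  hence pos: "1 + c * \<rho> > 0" using assms(5) by simp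
  have Lpos: "L > 0" using assms(1,2) by simp
  show "\<alpha> > 0" using pos Lpos assms(4,8) by simp
  show aL: "\<alpha> * L = (1 + \<rho>) * (1 + c * \<rho>)" using Lpos assms(8) by simp
  have key: "\<kappa> * ((1 - \<rho>) * (1 - c * \<rho>)) = (1 + \<rho>) * (1 + c * \<rho>)"
  proof -
    have "\<kappa> * (1 - c*\<rho>) = s * (1 + c * \<rho>)" using cdef by (simp add: algebra_simps)
    hence "\<kappa> * (1 - c*\<rho>) * (1 - \<rho>) = s * (1 + c * \<rho>) * (1 - \<rho>)" by simp
    also have "\<dots> = (s * (1 - \<rho>)) * (1 + c * \<rho>)" by (simp add: ac_simps)
    also have "\<dots> = (1 + \<rho>) * (1 + c * \<rho>)" using sr by simp
    finally show ?thesis by (simp add: ac_simps)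
  qed
  have "L = \<kappa> * m" using assms(1,3) by simp
  hence "\<alpha> * m * \<kappa> = (1 + \<rho>) * (1 + c * \<rho>)" using aL by (simp add: algebra_simps)
  thus "\<alpha> * m = (1 - \<rho>) * (1 - c * \<rho>)" using key k1
    by (metis mult.commute mult_cancel_left not_one_le_zero)
qed

lemma Jhat_form: "Jhat \<sigma>w \<alpha> \<beta> 0 lam = \<sigma>w\<^sup>2 * (1 + \<beta>) / ((1 - \<beta>) * ((\<alpha> * lam) * (2 * (1 + \<beta>) - \<alpha> * lam)))"
proof -
  have "Jhat \<sigma>w \<alpha> \<beta> 0 lam = (2 * (\<sigma>w\<^sup>2 * (1 + \<beta>))) / (2 * ((1 - \<beta>) * ((\<alpha> * lam) * (2 * (1 + \<beta>) - \<alpha> * lam))))"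
    unfolding Jhat_def md_def ml_def mh_def ma_def mb_def by (simp add: algebra_simps)
  also have "\<dots> = \<sigma>w\<^sup>2 * (1 + \<beta>) / ((1 - \<beta>) * ((\<alpha> * lam) * (2 * (1 + \<beta>) - \<alpha> * lam)))"
    by (rule mult_divide_mult_cancel_left) simp
  finally show ?thesis .
qed

lemma Jhat_part:
  fixes m L \<rho> \<sigma>w \<kappa> c \<alpha> \<beta> :: real
  assumes "0 < m" and "m \<le> L" and "\<kappa> = L / m"
    and "0 < \<rho>" and "\<rho> < 1"
    and "\<sigma>w \<ge> 0"
    and c1: "-1 \<le> c" and c2: "c \<le> 1" and ap: "\<alpha> > 0"
    and aL: "\<alpha> * L = (1 + \<rho>) * (1 + c * \<rho>)"
    and am: "\<alpha> * m = (1 - \<rho>) * (1 - c * \<rho>)"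
    and "\<beta> = c * \<rho>\<^sup>2"
  shows "(\<forall>lam \<in> {m..L}. Jhat \<sigma>w \<alpha> \<beta> 0 lam \<le> Jhat \<sigma>w \<alpha> \<beta> 0 m)
    \<and> Jhat \<sigma>w \<alpha> \<beta> 0 m = Jhat \<sigma>w \<alpha> \<beta> 0 L
    \<and> Jhat \<sigma>w \<alpha> \<beta> 0 L = \<sigma>w\<^sup>2 * (\<kappa> + 1) / (2 * (1 - c * \<rho>\<^sup>2) * (1 + \<rho>) * (1 + c * \<rho>))
    \<and> (\<forall>lam \<in> {m..L}. Jhat \<sigma>w \<alpha> \<beta> 0 ((m + L) / 2) \<le> Jhat \<sigma>w \<alpha> \<beta> 0 lam)
    \<and> Jhat \<sigma>w \<alpha> \<beta> 0 ((m + L) / 2) = \<sigma>w\<^sup>2 / ((1 + c * \<rho>\<^sup>2) * (1 - c * \<rho>\<^sup>2))"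
proof -
  define tm where "tm = \<alpha> * m"
  define tL where "tL = \<alpha> * L"
  define B where "B = 1 + \<beta>"
  define g where "g = (\<lambda>t. t * (2 * B - t))"
  define N where "N = \<sigma>w\<^sup>2 * (1 + \<beta>)"
  have cr: "c * \<rho> \<le> 1 * \<rho>" using c2 assms(4) by (intro mult_right_mono) auto
  have cr2: "c * \<rho> \<ge> -1 * \<rho>" using c1 assms(4) by (intro mult_right_mono) auto
  have "c * \<rho>\<^sup>2 \<le> 1 * \<rho>\<^sup>2" using c2 by (intro mult_right_mono) auto
  moreover have "\<rho>\<^sup>2 < 1" using assms(4,5) by (simp add: power_less_one_iff)
  ultimately have b1: "1 - \<beta> > 0" using assms(12) by simp
  have "c * \<rho>\<^sup>2 \<ge> -1 * \<rho>\<^sup>2" using c1 by (intro mult_right_mono) auto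
  hence b2: "1 + \<beta> > 0" using assms(12) \<open>\<rho>\<^sup>2 < 1\<close> by simp
  have tmp: "tm > 0" unfolding tm_def am using cr assms(5) by simp
  have tLp: "tL > 0" unfolding tL_def aL using cr2 assms(4,5) by simp
  have sum: "tm + tL = 2 * B" unfolding tm_def tL_def aL am B_def assms(12) by (simp add: algebra_simps power2_eq_square)
  have Jf: "Jhat \<sigma>w \<alpha> \<beta> 0 lam = N / ((1 - \<beta>) * g (\<alpha> * lam))" for lam
    unfolding Jhat_form N_def g_def B_def ..
  have "2 * B - tm = tL" "2 * B - tL = tm" using sum by simp_all
  hence gm: "g tm = tm * tL" "g tL = tm * tL" unfolding g_def by (simp_all add: ac_simps)
  have Np: "N \<ge> 0" unfolding N_def using b2 by simp
  have B_eq: "2 * B = tm + tL" using sum by simp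
  have tle: "tm \<le> \<alpha> * lam \<and> \<alpha> * lam \<le> tL" if "lam \<in> {m..L}" for lam
    unfolding tm_def tL_def using that ap by auto
  have gge: "g (\<alpha> * lam) \<ge> tm * tL" if "lam \<in> {m..L}" for lam
  proof -
    have "g (\<alpha> * lam) - tm * tL = (\<alpha> * lam - tm) * (tL - \<alpha> * lam)"
      unfolding g_def B_eq by (simp add: algebra_simps) 
    moreover have "(\<alpha> * lam - tm) * (tL - \<alpha> * lam) \<ge> 0" using tle[OF that] by simp
    ultimately show ?thesis by simp
  qed
  have gle: "g t \<le> B * B" for t
  proof -
    have "B * B - g t = (B - t)\<^sup>2" unfolding g_def by (simp add: algebra_simps power2_eq_square)
    thus ?thesis by (metis diff_ge_0_iff_ge zero_le_power2)
  qed
  have mid: "\<alpha> * ((m + L) / 2) = B" using sum unfolding tm_def tL_def by (simp add: algebra_simps)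
  have gB: "g B = B * B" unfolding g_def by (simp add: algebra_simps)
  have tmtL: "tm * tL > 0" using tmp tLp by simp
  have A1: "\<forall>lam \<in> {m..L}. Jhat \<sigma>w \<alpha> \<beta> 0 lam \<le> Jhat \<sigma>w \<alpha> \<beta> 0 m"
  proof
    fix lam assume l: "lam \<in> {m..L}"
    have "N / ((1 - \<beta>) * g (\<alpha> * lam)) \<le> N / ((1 - \<beta>) * g tm)"
      apply (rule divide_left_mono[OF _ Np])
      using gge[OF l] b1 gm tmtL by (auto intro!: mult_pos_pos)
    thus "Jhat \<sigma>w \<alpha> \<beta> 0 lam \<le> Jhat \<sigma>w \<alpha> \<beta> 0 m" unfolding Jf tm_def .
  qed
  have A2: "Jhat \<sigma>w \<alpha> \<beta> 0 m = Jhat \<sigma>w \<alpha> \<beta> 0 L" unfolding Jf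
    using gm unfolding tm_def tL_def by simp
  have kt: "\<kappa> * tm = tL" unfolding tm_def tL_def assms(3) using assms(1) by simp
  have A3: "Jhat \<sigma>w \<alpha> \<beta> 0 L = \<sigma>w\<^sup>2 * (\<kappa> + 1) / (2 * (1 - c * \<rho>\<^sup>2) * (1 + \<rho>) * (1 + c * \<rho>))"
  proof -
    have "2 * B = tm * (\<kappa> + 1)" using sum kt by (simp add: algebra_simps)
    hence Ne: "N = \<sigma>w\<^sup>2 * (tm * (\<kappa> + 1)) / 2" unfolding N_def B_def by simp
    have "Jhat \<sigma>w \<alpha> \<beta> 0 L = N / ((1 - \<beta>) * (tm * tL))" using Jf[of L] gm(2) unfolding tL_def by simp
    also have "\<dots> = \<sigma>w\<^sup>2 * (\<kappa> + 1) / (2 * ((1 - \<beta>) * tL))" unfolding Ne using tmp b1 tLp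
      by (simp add: field_simps)
    finally show ?thesis unfolding tL_def aL assms(12) by (simp add: ac_simps)
  qed
  have A4: "\<forall>lam \<in> {m..L}. Jhat \<sigma>w \<alpha> \<beta> 0 ((m + L) / 2) \<le> Jhat \<sigma>w \<alpha> \<beta> 0 lam"
  proof
    fix lam assume l: "lam \<in> {m..L}"
    have "N / ((1 - \<beta>) * g B) \<le> N / ((1 - \<beta>) * g (\<alpha> * lam))"
      apply (rule divide_left_mono[OF _ Np])
      using gge[OF l] b1 gle[of "\<alpha> * lam"] gB tmtL by (auto intro!: mult_pos_pos)
    thus "Jhat \<sigma>w \<alpha> \<beta> 0 ((m + L) / 2) \<le> Jhat \<sigma>w \<alpha> \<beta> 0 lam" unfolding Jf mid .
  qed
  have A5: "Jhat \<sigma>w \<alpha> \<beta> 0 ((m + L) / 2) = \<sigma>w\<^sup>2 / ((1 + c * \<rho>\<^sup>2) * (1 - c * \<rho>\<^sup>2))"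
  proof -
    have "Jhat \<sigma>w \<alpha> \<beta> 0 ((m + L) / 2) = N / ((1 - \<beta>) * (B * B))" unfolding Jf mid gB ..
    also have "\<dots> = (\<sigma>w\<^sup>2 * B) / (((1 + \<beta>) * (1 - \<beta>)) * B)" unfolding N_def B_def by (simp add: ac_simps)
    also have "\<dots> = \<sigma>w\<^sup>2 / ((1 + \<beta>) * (1 - \<beta>))" using b2 unfolding B_def
      by (intro nonzero_mult_divide_mult_cancel_right) simp
    finally show ?thesis unfolding assms(12) .
  qed
  show ?thesis using A1 A2 A3 A4 A5 by blast
qed


lemma mi1: "(x::complex) * (if P then y else 0) = (if P then x * y else 0)" by simp
lemma mi2: "- (if P then (y::complex) else 0) = (if P then - y else 0)" by simp

lemma eig_block:
  fixes Q :: "real mat" and \<alpha> \<beta> :: real and z :: complex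
  assumes Q: "Q \<in> carrier_mat n n"
    and ev: "eigenvalue (map_mat complex_of_real (momentum_state_matrix \<alpha> \<beta> 0 n Q)) z"
    and z0: "z \<noteq> 0" and a0: "\<alpha> \<noteq> 0"
  shows "\<exists>u. u \<in> carrier_vec n \<and> u \<noteq> 0\<^sub>v n \<and>
     map_mat complex_of_real Q *\<^sub>v u = ((of_real (1 + \<beta>) * z - of_real \<beta> - z\<^sup>2) / (of_real \<alpha> * z)) \<cdot>\<^sub>v u"
proof -
  define Qc where "Qc = map_mat complex_of_real Q"
  have Qc: "Qc \<in> carrier_mat n n" using Q unfolding Qc_def by simp
  define Cc where "Cc = complex_of_real (- \<beta>) \<cdot>\<^sub>m 1\<^sub>m n"
  define Dc where "Dc = complex_of_real (1 + \<beta>) \<cdot>\<^sub>m 1\<^sub>m n - complex_of_real \<alpha> \<cdot>\<^sub>m Qc"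
  have M: "map_mat complex_of_real (momentum_state_matrix \<alpha> \<beta> 0 n Q) = four_block_mat (0\<^sub>m n n) (1\<^sub>m n) Cc Dc"
    unfolding momentum_state_matrix_def Cc_def Dc_def Qc_def
    by (rule eq_matI) (use Q in auto)
  have Cc: "Cc \<in> carrier_mat n n" and Dc: "Dc \<in> carrier_mat n n" unfolding Cc_def Dc_def using Qc by auto
  from ev Dc obtain w where w: "w \<in> carrier_vec (n + n)" "w \<noteq> 0\<^sub>v (n + n)"
    and Mw: "four_block_mat (0\<^sub>m n n) (1\<^sub>m n) Cc Dc *\<^sub>v w = z \<cdot>\<^sub>v w"
    unfolding eigenvalue_def eigenvector_def M by auto
  define u where "u = vec_first w n"
  define v where "v = vec_last w n"
  have u: "u \<in> carrier_vec n" and v: "v \<in> carrier_vec n" unfolding u_def v_def by auto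
  have wuv: "w = u @\<^sub>v v" unfolding u_def v_def using w(1) by simp
  have "four_block_mat (0\<^sub>m n n) (1\<^sub>m n) Cc Dc *\<^sub>v (u @\<^sub>v v) = (0\<^sub>m n n *\<^sub>v u + 1\<^sub>m n *\<^sub>v v) @\<^sub>v (Cc *\<^sub>v u + Dc *\<^sub>v v)"
    by (rule four_block_mat_mult_vec[OF _ _ Cc Dc u v]) auto
  moreover have "z \<cdot>\<^sub>v (u @\<^sub>v v) = (z \<cdot>\<^sub>v u) @\<^sub>v (z \<cdot>\<^sub>v v)"
    by (rule eq_vecI) (use u v in auto)
  ultimately have "(0\<^sub>m n n *\<^sub>v u + 1\<^sub>m n *\<^sub>v v) @\<^sub>v (Cc *\<^sub>v u + Dc *\<^sub>v v) = (z \<cdot>\<^sub>v u) @\<^sub>v (z \<cdot>\<^sub>v v)"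
    using Mw wuv by simp
  then have e1: "0\<^sub>m n n *\<^sub>v u + 1\<^sub>m n *\<^sub>v v = z \<cdot>\<^sub>v u" and e2: "Cc *\<^sub>v u + Dc *\<^sub>v v = z \<cdot>\<^sub>v v"
  proof -
    have c1: "0\<^sub>m n n *\<^sub>v u + 1\<^sub>m n *\<^sub>v v \<in> carrier_vec n"
      using u v by (intro add_carrier_vec mult_mat_vec_carrier) auto
    have c2: "z \<cdot>\<^sub>v u \<in> carrier_vec n" using u by auto
    from this this show "0\<^sub>m n n *\<^sub>v u + 1\<^sub>m n *\<^sub>v v = z \<cdot>\<^sub>v u" "Cc *\<^sub>v u + Dc *\<^sub>v v = z \<cdot>\<^sub>v v"
      using append_vec_eq[OF c1 c2] \<open>(0\<^sub>m n n *\<^sub>v u + 1\<^sub>m n *\<^sub>v v) @\<^sub>v (Cc *\<^sub>v u + Dc *\<^sub>v v) = (z \<cdot>\<^sub>v u) @\<^sub>v (z \<cdot>\<^sub>v v)\<close> by blast+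
  qed
  have z0m: "0\<^sub>m n n *\<^sub>v u = 0\<^sub>v n" by (rule eq_vecI) (use u in auto)
  have vz: "v = z \<cdot>\<^sub>v u" using e1 u v unfolding z0m by simp
  have u0: "u \<noteq> 0\<^sub>v n"
  proof
    assume "u = 0\<^sub>v n"
    moreover have "z \<cdot>\<^sub>v 0\<^sub>v n = 0\<^sub>v n" by (rule eq_vecI) auto
    ultimately have "w = 0\<^sub>v n @\<^sub>v 0\<^sub>v n" using wuv vz by simp
    also have "\<dots> = 0\<^sub>v (n + n)" by (rule eq_vecI) auto
    finally show False using w(2) by simp
  qed
  define \<mu> where "\<mu> = (of_real (1 + \<beta>) * z - of_real \<beta> - z\<^sup>2) / (of_real \<alpha> * z)"
  have "Qc *\<^sub>v u = \<mu> \<cdot>\<^sub>v u"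
  proof (rule eq_vecI)
    fix i assume "i < dim_vec (\<mu> \<cdot>\<^sub>v u)"
    hence i: "i < n" using u by simp
    have "(Cc *\<^sub>v u + Dc *\<^sub>v v) $ i = (z \<cdot>\<^sub>v v) $ i" using e2 by simp
    hence "- of_real \<beta> * u $ i + of_real (1 + \<beta>) * (z * u $ i) - of_real \<alpha> * (z * (Qc *\<^sub>v u) $ i) = z * (z * u $ i)"
      using i u Qc unfolding vz Cc_def Dc_def by (simp add: scalar_prod_def algebra_simps mi1 mi2 sum.distrib sum_subtractf sum_distrib_left)
    thus "(Qc *\<^sub>v u) $ i = (\<mu> \<cdot>\<^sub>v u) $ i" using i u z0 a0 unfolding \<mu>_def
      by (simp add: field_simps power2_eq_square)
  qed (use u Qc in auto)
  thus ?thesis using u u0 unfolding Qc_def \<mu>_def by blast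
qed


lemma herm:
  fixes Q :: "real mat" and u :: "complex vec" and \<mu> :: complex
  assumes Q: "Q \<in> carrier_mat n n" and sym: "transpose_mat Q = Q"
    and u: "u \<in> carrier_vec n" and u0: "u \<noteq> 0\<^sub>v n"
    and ev: "map_mat complex_of_real Q *\<^sub>v u = \<mu> \<cdot>\<^sub>v u"
  shows "Im \<mu> = 0 \<and> eigenvalue Q (Re \<mu>)"
proof -
  have qi: "(\<Sum>j = 0..<n. complex_of_real (Q $$ (i, j)) * u $ j) = \<mu> * u $ i" if i: "i < n" for i
  proof -
    have "(map_mat complex_of_real Q *\<^sub>v u) $ i = (\<mu> \<cdot>\<^sub>v u) $ i" using ev by simp
    thus ?thesis using i Q u by (simp add: scalar_prod_def)
  qed
  have symQ: "Q $$ (i, j) = Q $$ (j, i)" if "i < n" "j < n" for i j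
  proof -
    have "transpose_mat Q $$ (j, i) = Q $$ (i, j)" using that Q by simp
    thus ?thesis using sym by simp
  qed
  define S where "S = (\<Sum>i = 0..<n. cnj (u $ i) * (\<Sum>j = 0..<n. complex_of_real (Q $$ (i, j)) * u $ j))"
  define N where "N = (\<Sum>i = 0..<n. (cmod (u $ i))\<^sup>2)"
  have S1: "S = \<mu> * of_real N"
  proof -
    have "S = (\<Sum>i = 0..<n. \<mu> * (cnj (u $ i) * u $ i))" unfolding S_def
      by (rule sum.cong) (simp_all add: qi)
    also have "\<dots> = \<mu> * of_real N" unfolding N_def
      unfolding of_real_sum sum_distrib_left
      by (intro sum.cong refl) (simp add: complex_norm_square[symmetric] mult.commute)
    finally show ?thesis .
  qed
  have S2: "cnj S = S"
  proof -
    have "cnj S = (\<Sum>i = 0..<n. \<Sum>j = 0..<n. u $ i * complex_of_real (Q $$ (i, j)) * cnj (u $ j))"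
      unfolding S_def by (simp add: sum_distrib_left ac_simps)
    also have "\<dots> = (\<Sum>j = 0..<n. \<Sum>i = 0..<n. u $ i * complex_of_real (Q $$ (i, j)) * cnj (u $ j))"
      by (rule sum.swap)
    also have "\<dots> = S" unfolding S_def sum_distrib_left
      by (intro sum.cong refl) (auto simp: symQ ac_simps)
    finally show ?thesis .
  qed
  have Npos: "N > 0"
  proof -
    obtain k where k: "k < n" "u $ k \<noteq> 0"
      using u0 u by (metis carrier_vecD eq_vecI index_zero_vec(1) index_zero_vec(2))
    have "(cmod (u $ k))\<^sup>2 \<le> N" unfolding N_def
      using k by (intro member_le_sum) auto
    moreover have "(cmod (u $ k))\<^sup>2 > 0" using k by simp
    ultimately show ?thesis by linarith
  qed
  have "cnj \<mu> * of_real N = \<mu> * of_real N" using S1 S2 by (metis complex_cnj_complex_of_real complex_cnj_mult)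
  hence "cnj \<mu> = \<mu>" using Npos by simp
  hence im: "Im \<mu> = 0" by (metis Reals_cnj_iff complex_is_Real_iff)
  hence mr: "\<mu> = of_real (Re \<mu>)" by (simp add: complex_eq_iff)
  define r where "r = Re \<mu>"
  define x where "x = vec n (\<lambda>i. Re (u $ i))"
  define y where "y = vec n (\<lambda>i. Im (u $ i))"
  have x: "x \<in> carrier_vec n" and y: "y \<in> carrier_vec n" unfolding x_def y_def by auto
  have qr: "(\<Sum>j = 0..<n. Q $$ (i, j) * Re (u $ j)) = r * Re (u $ i)"
    "(\<Sum>j = 0..<n. Q $$ (i, j) * Im (u $ j)) = r * Im (u $ i)" if i: "i < n" for i
  proof -
    have e: "(\<Sum>j = 0..<n. complex_of_real (Q $$ (i, j)) * u $ j) = of_real r * u $ i"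
      using qi[OF i] mr unfolding r_def by simp
    from arg_cong[OF e, of Re] show "(\<Sum>j = 0..<n. Q $$ (i, j) * Re (u $ j)) = r * Re (u $ i)"
      by (simp add: Re_sum)
    from arg_cong[OF e, of Im] show "(\<Sum>j = 0..<n. Q $$ (i, j) * Im (u $ j)) = r * Im (u $ i)"
      by (simp add: Im_sum)
  qed
  have Qx: "Q *\<^sub>v x = r \<cdot>\<^sub>v x"
    by (rule eq_vecI) (use Q qr in \<open>auto simp: x_def scalar_prod_def\<close>)
  have Qy: "Q *\<^sub>v y = r \<cdot>\<^sub>v y"
    by (rule eq_vecI) (use Q qr in \<open>auto simp: y_def scalar_prod_def\<close>)
  have "x \<noteq> 0\<^sub>v n \<or> y \<noteq> 0\<^sub>v n"
  proof (rule ccontr)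
    assume "\<not> ?thesis"
    hence "x = 0\<^sub>v n" "y = 0\<^sub>v n" by auto
    have "u = 0\<^sub>v n"
    proof (rule eq_vecI)
      fix i assume "i < dim_vec (0\<^sub>v n :: complex vec)"
      hence i: "i < n" by simp
      have "x $ i = 0" "y $ i = 0" using \<open>x = 0\<^sub>v n\<close> \<open>y = 0\<^sub>v n\<close> i by auto
      thus "u $ i = 0\<^sub>v n $ i" using i unfolding x_def y_def by (simp add: complex_eq_iff)
    qed (use u in auto)
    thus False using u0 by simp
  qed
  hence "eigenvalue Q r" unfolding eigenvalue_def eigenvector_def using Q x y Qx Qy by auto
  thus ?thesis using im unfolding r_def by simp
qed


lemma real_root_bound:
  fixes x p c \<rho> :: real
  assumes r: "\<rho> > 0" and c1: "-1 \<le> c" and c2: "c \<le> 1" and pb: "\<bar>p\<bar> \<le> \<rho> * (1 + c)"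
    and eq: "x * x - p * x + c * \<rho> * \<rho> = 0"
  shows "\<bar>x\<bar> \<le> \<rho>"
proof (rule ccontr)
  assume "\<not> ?thesis"
  hence "x > \<rho> \<or> x < -\<rho>" by auto
  thus False
  proof
    assume x: "x > \<rho>"
    have f: "\<rho> * (\<rho> * (1 + c) - p) \<ge> 0" using r pb by simp
    have "\<rho> * (1 + c) \<le> \<rho> * 2" using r c2 by simp
    hence "x + \<rho> - p > 0" using x pb by linarith
    hence "(x - \<rho>) * (x + \<rho> - p) > 0" using x by (intro mult_pos_pos) auto
    moreover have "x * x - p * x + c * \<rho> * \<rho> = \<rho> * (\<rho> * (1 + c) - p) + (x - \<rho>) * (x + \<rho> - p)"
      by (simp add: algebra_simps)
    ultimately show False using f eq by linarith
  next
    assume x: "x < -\<rho>"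
    have f: "\<rho> * (\<rho> * (1 + c) + p) \<ge> 0" using r pb by simp
    have "\<rho> * (1 + c) \<le> \<rho> * 2" using r c2 by simp
    hence "-x + \<rho> + p > 0" using x pb by linarith
    hence "(-x - \<rho>) * (-x + \<rho> + p) > 0" using x by (intro mult_pos_pos) auto
    moreover have "x * x - p * x + c * \<rho> * \<rho> = \<rho> * (\<rho> * (1 + c) + p) + (-x - \<rho>) * (-x + \<rho> + p)"
      by (simp add: algebra_simps)
    ultimately show False using f eq by linarith
  qed
qed

lemma root_bound:
  fixes z :: complex and p c \<rho> :: real
  assumes r: "\<rho> > 0" and c1: "-1 \<le> c" and c2: "c \<le> 1" and pb: "\<bar>p\<bar> \<le> \<rho> * (1 + c)"
    and eq: "z * z - of_real p * z + of_real (c * \<rho> * \<rho>) = 0"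
  shows "cmod z \<le> \<rho>"
proof -
  define x where "x = Re z"
  define y where "y = Im z"
  have zxy: "z = Complex x y" unfolding x_def y_def by simp
  have re: "x * x - y * y - p * x + c * \<rho> * \<rho> = 0" using arg_cong[OF eq, of Re] unfolding zxy by simp
  have im: "y * (2 * x - p) = 0" using arg_cong[OF eq, of Im] unfolding zxy by (simp add: algebra_simps)
  show ?thesis
  proof (cases "y = 0")
    case True
    hence "\<bar>x\<bar> \<le> \<rho>" using real_root_bound[OF r c1 c2 pb] re by simp
    moreover have "cmod z = \<bar>x\<bar>" using True unfolding x_def y_def by (simp add: cmod_def)
    ultimately show ?thesis by simp
  next
    case False
    hence xp: "p = 2 * x" using im by simp
    have "x * x + y * y = c * \<rho> * \<rho>" using re unfolding xp by (simp add: algebra_simps)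
    also have "\<dots> \<le> 1 * \<rho> * \<rho>" using c2 r by (intro mult_right_mono) auto
    finally have "(Re z)\<^sup>2 + (Im z)\<^sup>2 \<le> \<rho>\<^sup>2" unfolding x_def y_def by (simp add: power2_eq_square)
    hence "(cmod z)\<^sup>2 \<le> \<rho>\<^sup>2" by (simp add: cmod_power2)
    from power2_le_imp_le[OF this] show ?thesis using r by simp
  qed
qed


lemma rate_part:
  fixes m L \<rho> c \<alpha> \<beta> :: real
  assumes m0: "0 < m" and mL: "m \<le> L" and r0: "0 < \<rho>" and r1: "\<rho> < 1"
    and c1: "-1 \<le> c" and c2: "c \<le> 1" and ap: "\<alpha> > 0"
    and aL: "\<alpha> * L = (1 + \<rho>) * (1 + c * \<rho>)"
    and am: "\<alpha> * m = (1 - \<rho>) * (1 - c * \<rho>)"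
    and bdef: "\<beta> = c * \<rho>\<^sup>2"
  shows "achieves_rate m L \<alpha> \<beta> 0 \<rho>"
  unfolding achieves_rate_def
proof (intro allI impI)
  fix n Q assume hc: "quad_hessian_class m L n Q"
  have Q: "Q \<in> carrier_mat n n" and sym: "transpose_mat Q = Q" and evL: "eigenvalue Q L"
    and evb: "\<And>lam. eigenvalue Q lam \<Longrightarrow> m \<le> lam \<and> lam \<le> L"
    using hc unfolding quad_hessian_class_def by auto
  have n0: "n > 0"
  proof (rule ccontr)
    assume "\<not> n > 0" hence n: "n = 0" by simp
    from evL obtain v :: "real vec" where "v \<in> carrier_vec n" "v \<noteq> 0\<^sub>v n"
      using Q unfolding eigenvalue_def eigenvector_def by auto
    moreover have "v = 0\<^sub>v n" by (rule eq_vecI) (use \<open>v \<in> carrier_vec n\<close> n in auto)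
    ultimately show False by simp
  qed
  define A where "A = map_mat complex_of_real (momentum_state_matrix \<alpha> \<beta> 0 n Q)"
  have Ac: "A \<in> carrier_mat (n + n) (n + n)"
    unfolding A_def momentum_state_matrix_def using Q by auto
  from spectral_radius_mem_max(1)[OF Ac] n0 obtain z where zs: "z \<in> spectrum A"
    and sr: "spectral_radius A = cmod z" by auto
  have "cmod z \<le> \<rho>"
  proof (cases "z = 0")
    case True thus ?thesis using r0 by simp
  next
    case z0: False
    have evz: "eigenvalue A z" using zs unfolding spectrum_def by simp
    obtain u where u: "u \<in> carrier_vec n" "u \<noteq> 0\<^sub>v n"
      and Qu: "map_mat complex_of_real Q *\<^sub>v u = ((of_real (1 + \<beta>) * z - of_real \<beta> - z\<^sup>2) / (of_real \<alpha> * z)) \<cdot>\<^sub>v u"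
      using eig_block[OF Q evz[unfolded A_def] z0] ap by auto
    define \<mu> where "\<mu> = (of_real (1 + \<beta>) * z - of_real \<beta> - z\<^sup>2) / (of_real \<alpha> * z)"
    from herm[OF Q sym u Qu[folded \<mu>_def]] have im: "Im \<mu> = 0" and evr: "eigenvalue Q (Re \<mu>)" by auto
    define r where "r = Re \<mu>"
    have mr: "\<mu> = of_real r" using im unfolding r_def by (simp add: complex_eq_iff)
    have rb: "m \<le> r" "r \<le> L" using evb[OF evr] unfolding r_def by auto
    have "of_real r * (of_real \<alpha> * z) = of_real (1 + \<beta>) * z - of_real \<beta> - z\<^sup>2"
      using mr[unfolded \<mu>_def] z0 ap by (simp add: field_simps)
    hence eq: "z * z - of_real (1 + \<beta> - \<alpha> * r) * z + of_real (c * \<rho> * \<rho>) = 0"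
      unfolding bdef by (simp add: algebra_simps power2_eq_square)
    have "\<alpha> * m \<le> \<alpha> * r" "\<alpha> * r \<le> \<alpha> * L" using rb ap by auto
    hence "\<bar>1 + \<beta> - \<alpha> * r\<bar> \<le> \<rho> * (1 + c)" unfolding am aL bdef
      by (simp add: algebra_simps power2_eq_square abs_le_iff)
    from root_bound[OF r0 c1 c2 this eq] show ?thesis .
  qed
  thus "spectral_radius (map_mat complex_of_real (momentum_state_matrix \<alpha> \<beta> 0 n Q)) \<le> \<rho>"
    using sr unfolding A_def by simp
qed

theorem lemma4:
  fixes m L \<rho> \<sigma>w \<kappa> c \<alpha> \<beta> :: real
  assumes "0 < m" and "m \<le> L" and "\<kappa> = L / m"
    and "0 < \<rho>" and "\<rho> < 1"
    and "1 / (1 - \<rho>) \<ge> (sqrt \<kappa> + 1) / 2"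
    and "\<sigma>w \<ge> 0"
    and "c = (\<kappa> - (1 + \<rho>) / (1 - \<rho>)) / (\<rho> * (\<kappa> + (1 + \<rho>) / (1 - \<rho>)))"
    and "\<alpha> = (1 + \<rho>) * (1 + c * \<rho>) / L"
    and "\<beta> = c * \<rho>\<^sup>2"
  shows "-1 \<le> c \<and> c \<le> 1
    \<and> achieves_rate m L \<alpha> \<beta> 0 \<rho>
    \<and> (\<forall>lam \<in> {m..L}. Jhat \<sigma>w \<alpha> \<beta> 0 lam \<le> Jhat \<sigma>w \<alpha> \<beta> 0 m)
    \<and> Jhat \<sigma>w \<alpha> \<beta> 0 m = Jhat \<sigma>w \<alpha> \<beta> 0 L
    \<and> Jhat \<sigma>w \<alpha> \<beta> 0 L = \<sigma>w\<^sup>2 * (\<kappa> + 1) / (2 * (1 - c * \<rho>\<^sup>2) * (1 + \<rho>) * (1 + c * \<rho>))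
    \<and> (\<forall>lam \<in> {m..L}. Jhat \<sigma>w \<alpha> \<beta> 0 ((m + L) / 2) \<le> Jhat \<sigma>w \<alpha> \<beta> 0 lam)
    \<and> Jhat \<sigma>w \<alpha> \<beta> 0 ((m + L) / 2) = \<sigma>w\<^sup>2 / ((1 + c * \<rho>\<^sup>2) * (1 - c * \<rho>\<^sup>2))"
proof -
  note P = params[OF assms(1-6) assms(8) assms(9)]
  have R: "achieves_rate m L \<alpha> \<beta> 0 \<rho>"
    by (rule rate_part[OF assms(1,2,4,5) P assms(10)])
  have J: "(\<forall>lam \<in> {m..L}. Jhat \<sigma>w \<alpha> \<beta> 0 lam \<le> Jhat \<sigma>w \<alpha> \<beta> 0 m)
    \<and> Jhat \<sigma>w \<alpha> \<beta> 0 m = Jhat \<sigma>w \<alpha> \<beta> 0 L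
    \<and> Jhat \<sigma>w \<alpha> \<beta> 0 L = \<sigma>w\<^sup>2 * (\<kappa> + 1) / (2 * (1 - c * \<rho>\<^sup>2) * (1 + \<rho>) * (1 + c * \<rho>))
    \<and> (\<forall>lam \<in> {m..L}. Jhat \<sigma>w \<alpha> \<beta> 0 ((m + L) / 2) \<le> Jhat \<sigma>w \<alpha> \<beta> 0 lam)
    \<and> Jhat \<sigma>w \<alpha> \<beta> 0 ((m + L) / 2) = \<sigma>w\<^sup>2 / ((1 + c * \<rho>\<^sup>2) * (1 - c * \<rho>\<^sup>2))"
    by (rule Jhat_part[OF assms(1-5) assms(7) P assms(10)])
  show ?thesis using P(1,2) R J by blast
qed

end
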